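(* Let $\mathcal{G}=(V,E)$ be a DAG and let $x,y\in V$ and $K\subseteq V$ be such that $K$ does not $d$-separate $x$ and $y$. Then there exists a path $p$ from $x$ to $y$ such that (i) no non-collider on $p$ is in $K$, (ii) for every collider $n_i$ on $p$ there exists a directed path $q_i$ from $n_i$ to some $k_i\in K$ (possibly of length zero, $n_i=k_i$), (iii) each $q_i$ intersects $p$ only at $n_i$, and (iv) the paths $q_i$ are pairwise node-disjoint.
   Context: A path in a DAG is a sequence of distinct nodes in which consecutive nodes are adjacent; a node $k$ on a path is a collider if the path has consecutive edges $u\to k\leftarrow w$, and a non-collider otherwise. A directed path is one all of whose edges point in the same direction along the path. $d$-separation: $K$ $d$-separates $x$ and $y$ if every path between them contains a non-collider in $K$ or a collider that is not in $K$ and has no descendant in $K$. *)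

theory Defs
  imports Main
begin

definition is_dag :: "'a set \<Rightarrow> ('a \<times> 'a) set \<Rightarrow> bool" where
  "is_dag V E \<longleftrightarrow> finite V \<and> E \<subseteq> V \<times> V \<and> acyclic E"

definition adjacent :: "('a \<times> 'a) set \<Rightarrow> 'a \<Rightarrow> 'a \<Rightarrow> bool" where
  "adjacent E u v \<longleftrightarrow> (u, v) \<in> E \<or> (v, u) \<in> E"

definition is_path :: "'a set \<Rightarrow> ('a \<times> 'a) set \<Rightarrow> 'a list \<Rightarrow> bool" where
  "is_path V E p \<longleftrightarrow> p \<noteq> [] \<and> distinct p \<and> set p \<subseteq> V \<and>
     (\<forall>i. Suc i < length p \<longrightarrow> adjacent E (p ! i) (p ! Suc i))"

definition path_between :: "'a set \<Rightarrow> ('a \<times> 'a) set \<Rightarrow> 'a \<Rightarrow> 'a \<Rightarrow> 'a list \<Rightarrow> bool" where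
  "path_between V E x y p \<longleftrightarrow> is_path V E p \<and> hd p = x \<and> last p = y"

definition is_directed_path :: "'a set \<Rightarrow> ('a \<times> 'a) set \<Rightarrow> 'a list \<Rightarrow> bool" where
  "is_directed_path V E q \<longleftrightarrow> q \<noteq> [] \<and> distinct q \<and> set q \<subseteq> V \<and>
     (\<forall>i. Suc i < length q \<longrightarrow> (q ! i, q ! Suc i) \<in> E)"

definition collider :: "('a \<times> 'a) set \<Rightarrow> 'a list \<Rightarrow> nat \<Rightarrow> bool" where
  "collider E p i \<longleftrightarrow> 0 < i \<and> Suc i < length p \<and>
     (p ! (i - 1), p ! i) \<in> E \<and> (p ! Suc i, p ! i) \<in> E"

text \<open>Non-collider: a node on the path (position i) that is not a collider (includes endpoints).\<close>
definition non_collider :: "('a \<times> 'a) set \<Rightarrow> 'a list \<Rightarrow> nat \<Rightarrow> bool" where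
  "non_collider E p i \<longleftrightarrow> i < length p \<and> \<not> collider E p i"

definition descendants :: "('a \<times> 'a) set \<Rightarrow> 'a \<Rightarrow> 'a set" where
  "descendants E v = {w. (v, w) \<in> E\<^sup>*}"

definition d_separates :: "'a set \<Rightarrow> ('a \<times> 'a) set \<Rightarrow> 'a set \<Rightarrow> 'a \<Rightarrow> 'a \<Rightarrow> bool" where
  "d_separates V E K x y \<longleftrightarrow>
     (\<forall>p. path_between V E x y p \<longrightarrow>
        (\<exists>i. non_collider E p i \<and> p ! i \<in> K) \<or>
        (\<exists>i. collider E p i \<and> p ! i \<notin> K \<and> descendants E (p ! i) \<inter> K = {}))"

end

theory Submission
  imports Defs
begin

definition dp :: "'a set \<Rightarrow> ('a\<times>'a) set \<Rightarrow> 'a set \<Rightarrow> 'a list \<Rightarrow> 'a \<Rightarrow> bool" where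
 "dp V E K l v \<longleftrightarrow> is_directed_path V E l \<and> hd l = v \<and> last l \<in> K"

definition CS :: "('a\<times>'a) set \<Rightarrow> 'a list \<Rightarrow> 'a set" where
 "CS E p = (\<lambda>k. p!k) ` {k. collider E p k}"

definition valid :: "'a set \<Rightarrow> ('a\<times>'a) set \<Rightarrow> 'a set \<Rightarrow> 'a \<Rightarrow> 'a \<Rightarrow> 'a list \<Rightarrow> ('a \<Rightarrow> 'a list) \<Rightarrow> bool" where
 "valid V E K x y p Q \<longleftrightarrow> path_between V E x y p \<and> (\<forall>k. non_collider E p k \<longrightarrow> p!k \<notin> K)
   \<and> (\<forall>k. collider E p k \<longrightarrow> dp V E K (Q (p!k)) (p!k))"

definition mu :: "('a\<times>'a) set \<Rightarrow> 'a list \<Rightarrow> ('a \<Rightarrow> 'a list) \<Rightarrow> nat" where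
 "mu E p Q = length p + (\<Sum>v\<in>CS E p. length (Q v))"

lemma finite_CS: "finite (CS E p)"
proof -
  have "{k. collider E p k} \<subseteq> {..<length p}" by (auto simp: collider_def)
  then show ?thesis unfolding CS_def by (meson finite_imageI finite_lessThan finite_subset)
qed

lemma collider_transfer:
  assumes "0 < k \<longleftrightarrow> 0 < k'" "Suc k < length r \<longleftrightarrow> Suc k' < length p"
    "0 < k \<Longrightarrow> Suc k < length r \<Longrightarrow> r!(k-1) = p!(k'-1) \<and> r!k = p!k' \<and> r!Suc k = p!Suc k'"
  shows "collider E r k \<longleftrightarrow> collider E p k'"
  using assms by (auto simp: collider_def)

lemma collider_len: "collider E p k \<Longrightarrow> Suc k < length p" by (simp add: collider_def)

locale dagctx =
  fixes V :: "'a set" and E :: "('a\<times>'a) set" and K :: "'a set"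
  assumes dag: "is_dag V E" and KV: "K \<subseteq> V"
begin

lemma acyc: "acyclic E" using dag by (simp add: is_dag_def)
lemma EV: "E \<subseteq> V \<times> V" using dag by (simp add: is_dag_def)

lemma no2: "(u,v) \<in> E \<Longrightarrow> (v,u) \<notin> E"
proof
  assume "(u,v) \<in> E" "(v,u) \<in> E"
  then have "(u,u) \<in> E\<^sup>+" by (meson trancl.r_into_trancl trancl_into_trancl)
  with acyc show False by (simp add: acyclic_def)
qed

lemma nocol_fwd: "(r!k, r!Suc k) \<in> E \<Longrightarrow> \<not> collider E r k"
  using no2 by (auto simp: collider_def)

lemma nocol_bwd: "0 < k \<Longrightarrow> (r!k, r!(k-1)) \<in> E \<Longrightarrow> \<not> collider E r k"
  using no2 by (auto simp: collider_def)

lemma splice: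
  assumes v: "valid V E K x y p Q" and n: "n = length p"
  and ij: "i < j" "j < n"
  and q1: "is_directed_path V E q1" "q1!0 = p!i" "1 \<le> a" "a < length q1" "last q1 \<in> K"
  and q2: "is_directed_path V E q2" "q2!0 = p!j" "b < length q2" "q2!b = q1!a"
  and H1: "\<forall>s m. 1 \<le> s \<longrightarrow> s \<le> a \<longrightarrow> m < n \<longrightarrow> (m \<le> i \<or> j < m) \<longrightarrow> q1!s \<noteq> p!m"
  and H2: "\<forall>t m. t < b \<longrightarrow> m < n \<longrightarrow> (m \<le> i \<or> j < m) \<longrightarrow> q2!t \<noteq> p!m"
  and H3: "\<forall>s t. 1 \<le> s \<longrightarrow> s \<le> a \<longrightarrow> t < b \<longrightarrow> q1!s \<noteq> q2!t"
  and K1: "\<forall>s<a. q1!s \<notin> K" and K2: "\<forall>t<b. q2!t \<notin> K"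
  and M: "collider E p i" "Q (p!i) = q1" "0 < b \<longrightarrow> collider E p j \<and> Q (p!j) = q2"
  shows "\<exists>r Q'. valid V E K x y r Q' \<and> mu E r Q' < mu E p Q"
proof -
  have pb: "path_between V E x y p" and vnc: "\<And>k. non_collider E p k \<Longrightarrow> p!k \<notin> K"
    and vc: "\<And>k. collider E p k \<Longrightarrow> dp V E K (Q (p!k)) (p!k)"
    using v by (auto simp: valid_def)
  have pne: "p \<noteq> []" and pd: "distinct p" and pV: "set p \<subseteq> V"
    and padj: "\<And>m. Suc m < n \<Longrightarrow> adjacent E (p!m) (p!Suc m)"
    and hx: "hd p = x" and ly: "last p = y"
    using pb n by (auto simp: path_between_def is_path_def)
  have q1d: "distinct q1" and q1V: "set q1 \<subseteq> V" and q1e: "\<And>s. Suc s < length q1 \<Longrightarrow> (q1!s, q1!Suc s) \<in> E"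
    using q1 by (auto simp: is_directed_path_def)
  have q2d: "distinct q2" and q2V: "set q2 \<subseteq> V" and q2e: "\<And>s. Suc s < length q2 \<Longrightarrow> (q2!s, q2!Suc s) \<in> E"
    using q2 by (auto simp: is_directed_path_def)
  have pdi: "\<And>m m'. m < n \<Longrightarrow> m' < n \<Longrightarrow> p!m = p!m' \<longleftrightarrow> m = m'"
    using pd n by (simp add: nth_eq_iff_index_eq)
  have q1di: "\<And>m m'. m < length q1 \<Longrightarrow> m' < length q1 \<Longrightarrow> q1!m = q1!m' \<longleftrightarrow> m = m'"
    using q1d by (simp add: nth_eq_iff_index_eq)
  have q2di: "\<And>m m'. m < length q2 \<Longrightarrow> m' < length q2 \<Longrightarrow> q2!m = q2!m' \<longleftrightarrow> m = m'"
    using q2d by (simp add: nth_eq_iff_index_eq)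
  define w where "w = q1!a"
  define f where "f = (\<lambda>m. if m \<le> i then p!m else if m \<le> i+a then q1!(m-i)
      else if m \<le> i+a+b then q2!(i+a+b-m) else p!(m+j-(i+a+b)))"
  have fA: "\<And>m. m \<le> i \<Longrightarrow> f m = p!m" by (simp add: f_def)
  have fB: "\<And>m. i \<le> m \<Longrightarrow> m \<le> i+a \<Longrightarrow> f m = q1!(m-i)"
    using q1(2) by (auto simp: f_def)
  have fC: "\<And>m. i+a \<le> m \<Longrightarrow> m \<le> i+a+b \<Longrightarrow> f m = q2!(i+a+b-m)"
  proof -
    fix m assume "i+a \<le> m" "m \<le> i+a+b"
    then show "f m = q2!(i+a+b-m)"
      using q1(3) q2(4) by (cases "m = i+a") (auto simp: f_def)
  qed
  have fD: "\<And>m. i+a+b \<le> m \<Longrightarrow> f m = p!(m+j-(i+a+b))"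
  proof -
    fix m assume m: "i+a+b \<le> m"
    show "f m = p!(m+j-(i+a+b))"
    proof (cases "m = i+a+b")
      case True
      then show ?thesis using q1(3) q2(2,4) by (cases "b = 0") (auto simp: f_def)
    qed (use m in \<open>auto simp: f_def\<close>)
  qed
  define L where "L = i + a + b + (n - j)"
  define r where "r = map f [0..<L]"
  have lr: "length r = L" by (simp add: r_def)
  have rn: "\<And>m. m < L \<Longrightarrow> r!m = f m" by (simp add: r_def)

  have Lj: "i + a + b < L" using ij L_def by simp
  have neq: "f m1 \<noteq> f m2" if m: "m1 < m2" "m2 < L" for m1 m2
  proof (cases "m2 \<le> i")
    case True
    then show ?thesis using m fA pdi ij by auto
  next
    case c2: False
    show ?thesis
    proof (cases "m2 \<le> i+a")
      case True
      have e2: "f m2 = q1!(m2-i)" using fB True c2 by simp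
      have s: "1 \<le> m2 - i" "m2 - i \<le> a" using c2 True by auto
      show ?thesis
      proof (cases "m1 \<le> i")
        case True
        then show ?thesis using s e2 fA H1[rule_format, of "m2-i" m1] ij by auto
      next
        case False
        then show ?thesis using e2 fB[of m1] q1di \<open>m2 \<le> i+a\<close> q1(4) m by auto
      qed
    next
      case c3: False
      show ?thesis
      proof (cases "m2 \<le> i+a+b")
        case c6: True
        have e2: "f m2 = q2!(i+a+b-m2)" using fC c6 c3 by simp
        have t: "i+a+b-m2 < b" using c3 c6 by simp
        show ?thesis
        proof (cases "m1 \<le> i")
          case True
          then show ?thesis using e2 t fA H2[rule_format, of "i+a+b-m2" m1] ij by auto
        next
          case c1: False
          show ?thesis
          proof (cases "m1 \<le> i+a")
            case True
            have "1 \<le> m1 - i" "m1 - i \<le> a" using c1 True by auto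
            then show ?thesis using e2 t True fB[of m1] H3[rule_format, of "m1-i" "i+a+b-m2"] c1 by auto
          next
            case False
            then show ?thesis using e2 fC[of m1] q2di[of "i+a+b-m1" "i+a+b-m2"] q2(3) m t c6 by auto
          qed
        qed
      next
        case c4: False
        have e2: "f m2 = p!(m2+j-(i+a+b))" using fD c4 by simp
        have t: "j < m2+j-(i+a+b)" "m2+j-(i+a+b) < n" using c4 m L_def by auto
        show ?thesis
        proof (cases "m1 \<le> i")
          case True
          then show ?thesis using e2 t fA pdi ij by auto
        next
          case c1: False
          show ?thesis
          proof (cases "m1 \<le> i+a")
            case True
            have "1 \<le> m1 - i" "m1 - i \<le> a" using c1 True by auto
            then show ?thesis using e2 t True fB[of m1] H1[rule_format, of "m1-i" "m2+j-(i+a+b)"] c1 by auto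
          next
            case c5: False
            show ?thesis
            proof (cases "m1 \<le> i+a+b")
              case True
              have "i+a+b-m1 < b" using c5 True by auto
              then show ?thesis using e2 t True fC[of m1] H2[rule_format, of "i+a+b-m1" "m2+j-(i+a+b)"] c5 by auto
            next
              case False
              then show ?thesis using e2 t fD[of m1] pdi m L_def by auto
            qed
          qed
        qed
      qed
    qed
  qed
  have rd: "distinct r"
  proof -
    have "inj_on f {0..<L}"
      by (rule inj_onI) (metis atLeastLessThan_iff linorder_neqE_nat neq)
    then show ?thesis by (simp add: r_def distinct_map)
  qed
  have fV: "f m \<in> V" if m: "m < L" for m
  proof -
    consider "m \<le> i" | "i \<le> m" "m \<le> i+a" | "i+a \<le> m" "m \<le> i+a+b" | "i+a+b \<le> m" by linarith
    then show ?thesis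
    proof cases
      case 1 then show ?thesis using fA pV ij n by (metis nth_mem order.strict_trans1 subsetD less_trans)
    next
      case 2 then show ?thesis using fB q1V q1(4) by (metis nth_mem le_diff_conv le_less_trans add.commute subsetD)
    next
      case 3 then show ?thesis using fC q2V q2(3) by (metis nth_mem diff_le_mono2 diff_add_inverse le_less_trans subsetD add_leD1 le_diff_conv2 nat_le_linear)
    next
      case 4
      have "m+j-(i+a+b) < n" using 4 m L_def by auto
      then show ?thesis using fD[OF 4] pV n by (metis nth_mem subsetD)
    qed
  qed
  have rV: "set r \<subseteq> V" using fV by (auto simp: r_def)
  have radj: "adjacent E (r!m) (r!Suc m)" if m: "Suc m < L" for m
  proof -
    consider "m < i" | "i \<le> m" "m < i+a" | "i+a \<le> m" "m < i+a+b" | "i+a+b \<le> m" by linarith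
    then show ?thesis
    proof cases
      case 1 then show ?thesis using fA[of m] fA[of "Suc m"] padj[of m] rn m ij by simp
    next
      case 2
      have e: "(q1!(m-i), q1!Suc (m-i)) \<in> E" using q1e[of "m-i"] 2 q1(4) by simp
      have "Suc m - i = Suc (m - i)" using 2 by simp
      then show ?thesis using e fB[of m] fB[of "Suc m"] rn m 2 by (simp add: adjacent_def)
    next
      case 3
      define t where "t = i+a+b - Suc m"
      have t1: "i+a+b-m = Suc t" using 3 t_def by simp
      have e: "(q2!t, q2!Suc t) \<in> E" using q2e[of t] 3 q2(3) t_def by simp
      then show ?thesis using fC[of m] fC[of "Suc m"] rn m 3 t1 t_def by (simp add: adjacent_def)
    next
      case 4
      have "Suc (m+j-(i+a+b)) < n" using 4 m L_def by auto
      moreover have "Suc m + j - (i+a+b) = Suc (m+j-(i+a+b))" using 4 by simp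
      ultimately show ?thesis using fD[of m] fD[of "Suc m"] padj rn m 4 by simp
    qed
  qed
  have rhd: "hd r = x"
  proof -
    have "r \<noteq> []" using lr Lj by auto
    then have "hd r = r!0" by (simp add: hd_conv_nth)
    also have "\<dots> = p!0" using rn[of 0] fA[of 0] Lj by simp
    also have "\<dots> = x" using hx pne by (simp add: hd_conv_nth)
    finally show ?thesis .
  qed
  have rlast: "last r = y"
  proof -
    have "r \<noteq> []" using lr Lj by auto
    then have "last r = r!(L-1)" using lr by (simp add: last_conv_nth)
    also have "\<dots> = p!(L-1+j-(i+a+b))" using rn[of "L-1"] fD[of "L-1"] Lj by simp
    also have "L-1+j-(i+a+b) = n - 1" using L_def ij by simp
    also have "p!(n-1) = y" using ly pne n by (simp add: last_conv_nth)
    finally show ?thesis .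
  qed
  have rpath: "path_between V E x y r"
    using rd rV radj rhd rlast lr Lj unfolding path_between_def is_path_def by auto
  have tr1: "collider E r k \<longleftrightarrow> collider E p k" if k: "k < i" for k
  proof (rule collider_transfer)
    show "Suc k < length r \<longleftrightarrow> Suc k < length p" using k lr Lj ij n by auto
    show "r!(k-1) = p!(k-1) \<and> r!k = p!k \<and> r!Suc k = p!Suc k"
      using k rn fA Lj by auto
  qed simp
  have tr5: "collider E r k \<longleftrightarrow> collider E p (k+j-(i+a+b))" if k: "i+a+b < k" "k < L" for k
  proof (rule collider_transfer)
    show "0 < k \<longleftrightarrow> 0 < k+j-(i+a+b)" using k by auto
    show "Suc k < length r \<longleftrightarrow> Suc (k+j-(i+a+b)) < length p" using k lr L_def n by auto
    assume "Suc k < length r"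
    moreover have "k - 1 + j - (i+a+b) = k+j-(i+a+b) - 1" "Suc k + j - (i+a+b) = Suc (k+j-(i+a+b))"
      using k by auto
    ultimately show "r!(k-1) = p!(k+j-(i+a+b)-1) \<and> r!k = p!(k+j-(i+a+b)) \<and> r!Suc k = p!Suc (k+j-(i+a+b))"
      using k rn fD[of "k-1"] fD[of k] fD[of "Suc k"] lr by auto
  qed
  have nc2: "\<not> collider E r k" if k: "i \<le> k" "k < i+a" for k
  proof (rule nocol_fwd)
    have e: "(q1!(k-i), q1!Suc (k-i)) \<in> E" using q1e[of "k-i"] k q1(4) by simp
    have "Suc k - i = Suc (k - i)" using k by simp
    then show "(r!k, r!Suc k) \<in> E" using e fB[of k] fB[of "Suc k"] rn k Lj by simp
  qed
  have nc4: "\<not> collider E r k" if k: "i+a < k" "k \<le> i+a+b" for k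
  proof (rule nocol_bwd)
    show "0 < k" using k by simp
    define t where "t = i+a+b - k"
    have t1: "i+a+b-(k-1) = Suc t" using k t_def by simp
    have e: "(q2!t, q2!Suc t) \<in> E" using q2e[of t] k q2(3) t_def by simp
    then show "(r!k, r!(k-1)) \<in> E" using fC[of k] fC[of "k-1"] rn k t1 t_def Lj by simp
  qed
  have colw: "collider E r (i+a)" if "0 < b"
  proof -
    have "Suc (a-1) = a" using q1(3) by simp
    then have e1: "(q1!(a-1), q1!a) \<in> E" using q1e[of "a-1"] q1(4) by simp
    have "Suc (b-1) = b" using that by simp
    then have e2: "(q2!(b-1), q1!a) \<in> E" using q2e[of "b-1"] q2(3,4) by simp
    have "r!(i+a-1) = q1!(a-1)" using rn fB[of "i+a-1"] q1(3) Lj by simp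
    moreover have "r!(i+a) = q1!a" using rn fB[of "i+a"] Lj by simp
    moreover have "r!Suc (i+a) = q2!(b-1)" using rn fC[of "Suc (i+a)"] Lj that by simp
    ultimately show ?thesis using e1 e2 q1(3) Lj that lr by (simp add: collider_def)
  qed
  have colw0: "collider E r (i+a)" if "b = 0" "collider E p j"
  proof -
    have "Suc (a-1) = a" using q1(3) by simp
    then have e1: "(q1!(a-1), q1!a) \<in> E" using q1e[of "a-1"] q1(4) by simp
    have cj: "Suc j < n" "(p!Suc j, p!j) \<in> E" using that(2) n by (auto simp: collider_def)
    have "r!(i+a-1) = q1!(a-1)" using rn fB[of "i+a-1"] q1(3) Lj by simp
    moreover have "r!(i+a) = q1!a" using rn fB[of "i+a"] Lj by simp
    moreover have "r!Suc (i+a) = p!Suc j" using rn fD[of "Suc (i+a)"] that(1) cj L_def by simp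
    moreover have "q1!a = p!j" using q2(2,4) that(1) by simp
    ultimately show ?thesis using e1 cj q1(3) that(1) lr L_def by (simp add: collider_def)
  qed
  have ncK: "r!k \<notin> K" if k: "k < L" "\<not> collider E r k" for k
  proof -
    consider "k < i" | "i \<le> k" "k < i+a" | "k = i+a" | "i+a < k" "k \<le> i+a+b" | "i+a+b < k" by linarith
    then show ?thesis
    proof cases
      case 1
      then have "non_collider E p k" using tr1 k ij n by (simp add: non_collider_def)
      then show ?thesis using vnc rn fA 1 k by simp
    next
      case 2 then show ?thesis using K1 rn fB k by simp
    next
      case 3
      have b0: "b = 0" using colw k 3 by auto
      have "\<not> collider E p j" using colw0 b0 k 3 by auto
      then have "non_collider E p j" using ij n by (simp add: non_collider_def)
      then show ?thesis using vnc rn fD[of k] k 3 b0 by simp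
    next
      case 4
      have "i+a+b-k < b" using 4 by simp
      then show ?thesis using K2 rn fC k 4 by simp
    next
      case 5
      have "non_collider E p (k+j-(i+a+b))" using tr5 5 k L_def n ij by (simp add: non_collider_def)
      then show ?thesis using vnc rn fD[of k] k 5 by simp
    qed
  qed
  have colcls: "(k < i \<and> collider E p k \<and> r!k = p!k) \<or> k = i+a
      \<or> (i+a+b < k \<and> collider E p (k+j-(i+a+b)) \<and> r!k = p!(k+j-(i+a+b)))"
    if c: "collider E r k" for k
  proof -
    have k: "k < L" using collider_len[OF c] lr by simp
    consider "k < i" | "i \<le> k" "k < i+a" | "k = i+a" | "i+a < k" "k \<le> i+a+b" | "i+a+b < k" by linarith
    then show ?thesis
    proof cases
      case 1 then show ?thesis using tr1 c rn fA k by simp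
    next
      case 2 then show ?thesis using nc2 c by simp
    next
      case 4 then show ?thesis using nc4 c by simp
    next
      case 5 then show ?thesis using tr5 c rn fD[of k] k by simp
    qed simp
  qed
  define Q' where "Q' = Q(w := drop a q1)"
  have dpw: "dp V E K (drop a q1) w"
  proof -
    have "is_directed_path V E (drop a q1)"
      using q1 q1d q1V q1e unfolding is_directed_path_def
      by (auto simp: set_drop_subset[THEN subsetD] dest: in_set_dropD)
    then show ?thesis using q1(4,5) w_def by (simp add: dp_def hd_drop_conv_nth)
  qed
  have wne: "w \<noteq> p!m" if "m < n" "m \<le> i \<or> j < m" for m
    using H1 that q1(3) w_def by auto
  have rvalid: "valid V E K x y r Q'"
    unfolding valid_def
  proof (intro conjI allI impI)
    show "path_between V E x y r" by (rule rpath)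
  next
    fix k assume "non_collider E r k"
    then show "r!k \<notin> K" using ncK lr by (simp add: non_collider_def)
  next
    fix k assume c: "collider E r k"
    from colcls[OF c] consider "k < i" "collider E p k" "r!k = p!k" | "k = i+a"
      | "i+a+b < k" "collider E p (k+j-(i+a+b))" "r!k = p!(k+j-(i+a+b))" by blast
    then show "dp V E K (Q' (r!k)) (r!k)"
    proof cases
      case 1
      then have "r!k \<noteq> w" using wne[of k] ij by fastforce
      then show ?thesis using vc 1 Q'_def by simp
    next
      case 2
      then have "r!k = w" using rn fB Lj w_def by simp
      then show ?thesis using dpw Q'_def by simp
    next
      case 3
      have "k+j-(i+a+b) < n" using collider_len[OF 3(2)] n by simp
      then have "r!k \<noteq> w" using wne[of "k+j-(i+a+b)"] 3 by fastforce
      then show ?thesis using vc 3 Q'_def by simp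
    qed
  qed
  define S0 where "S0 = (\<lambda>m. p!m) ` {m. collider E p m \<and> (m < i \<or> j < m)}"
  have S0f: "finite S0"
  proof -
    have "{m. collider E p m \<and> (m < i \<or> j < m)} \<subseteq> {..<n}" using n by (auto simp: collider_def)
    then show ?thesis unfolding S0_def by (meson finite_imageI finite_lessThan finite_subset)
  qed
  have wS0: "w \<notin> S0"
  proof
    assume "w \<in> S0"
    then obtain m where "collider E p m" "m < i \<or> j < m" "w = p!m" by (auto simp: S0_def)
    moreover then have "m < n" using collider_len n by fastforce
    ultimately show False using wne[of m] by auto
  qed
  have CSr: "CS E r \<subseteq> insert w S0"
  proof
    fix v assume "v \<in> CS E r"
    then obtain k where c: "collider E r k" and v: "v = r!k" by (auto simp: CS_def)
    from colcls[OF c] show "v \<in> insert w S0"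
    proof (elim disjE conjE)
      assume "k = i+a" then show ?thesis using v rn fB Lj w_def by simp
    next
      assume "k < i" "collider E p k" "r!k = p!k"
      then show ?thesis using v by (auto simp: S0_def)
    next
      assume h: "i+a+b < k" "collider E p (k+j-(i+a+b))" "r!k = p!(k+j-(i+a+b))"
      then have "j < k+j-(i+a+b)" by simp
      then show ?thesis using v h unfolding S0_def by blast
    qed
  qed
  have sum_r: "(\<Sum>v\<in>CS E r. length (Q' v)) \<le> (length q1 - a) + (\<Sum>v\<in>S0. length (Q v))"
  proof -
    have "(\<Sum>v\<in>CS E r. length (Q' v)) \<le> (\<Sum>v\<in>insert w S0. length (Q' v))"
      by (rule sum_mono2) (use S0f CSr in auto)
    also have "\<dots> = length (Q' w) + (\<Sum>v\<in>S0. length (Q' v))" using S0f wS0 by simp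
    also have "(\<Sum>v\<in>S0. length (Q' v)) = (\<Sum>v\<in>S0. length (Q v))"
      using wS0 Q'_def by (intro sum.cong) auto
    finally show ?thesis using Q'_def by simp
  qed
  define T where "T = S0 \<union> (if 0 < b then {p!j} else {})"
  have pcl: "m < n" if "collider E p m" for m using collider_len[OF that] n by simp
  have piT: "p!i \<notin> T"
  proof
    assume "p!i \<in> T"
    then consider "p!i \<in> S0" | "p!i = p!j" by (auto simp: T_def split: if_splits)
    then show False
    proof cases
      case 1
      then obtain m where "collider E p m" "m < i \<or> j < m" "p!i = p!m" by (auto simp: S0_def)
      then show False using pdi[of i m] pcl ij by auto
    next
      case 2 then show False using pdi[of i j] ij by auto
    qed
  qed
  have pjS: "p!j \<notin> S0"
  proof
    assume "p!j \<in> S0"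
    then obtain m where "collider E p m" "m < i \<or> j < m" "p!j = p!m" by (auto simp: S0_def)
    then show False using pdi[of j m] pcl ij by auto
  qed
  have Tf: "finite T" using S0f by (simp add: T_def)
  have sumT: "(\<Sum>v\<in>T. length (Q v)) = (\<Sum>v\<in>S0. length (Q v)) + (if 0 < b then length q2 else 0)"
    using M(3) pjS S0f by (auto simp: T_def)
  have TCS: "insert (p!i) T \<subseteq> CS E p"
    using M(1,3) unfolding T_def S0_def CS_def by auto
  have sum_p: "length q1 + (\<Sum>v\<in>S0. length (Q v)) + (if 0 < b then length q2 else 0) \<le> (\<Sum>v\<in>CS E p. length (Q v))"
  proof -
    have "(\<Sum>v\<in>insert (p!i) T. length (Q v)) \<le> (\<Sum>v\<in>CS E p. length (Q v))"
      by (rule sum_mono2) (use finite_CS TCS in auto)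
    moreover have "(\<Sum>v\<in>insert (p!i) T. length (Q v)) = length q1 + (\<Sum>v\<in>T. length (Q v))"
      using Tf piT M(2) by simp
    ultimately show ?thesis using sumT by simp
  qed
  have "mu E r Q' < mu E p Q"
  proof -
    have "mu E r Q' \<le> L + (length q1 - a) + (\<Sum>v\<in>S0. length (Q v))"
      using sum_r lr by (simp add: mu_def)
    also have "\<dots> < n + length q1 + (\<Sum>v\<in>S0. length (Q v)) + (if 0 < b then length q2 else 0)"
      using L_def ij q1(4) q2(3) by (cases "b = 0") auto
    also have "\<dots> \<le> mu E p Q" using sum_p n by (simp add: mu_def)
    finally show ?thesis .
  qed
  with rvalid show ?thesis by blast
qed

end

lemma last_take_Suc: "Suc s \<le> length l \<Longrightarrow> last (take (Suc s) l) = l ! s"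
proof -
  assume a: "Suc s \<le> length l"
  then have "take (Suc s) l \<noteq> []" by (cases l) auto
  then show ?thesis using a by (simp add: last_conv_nth min_def)
qed

context dagctx begin

lemma dpath_reach:
  assumes "is_directed_path V E l" "m < length l"
  shows "(l!0, l!m) \<in> E\<^sup>*"
  using assms(2)
proof (induction m)
  case (Suc m)
  then have "(l!m, l!Suc m) \<in> E" using assms(1) by (simp add: is_directed_path_def)
  with Suc show ?case by (meson Suc_lessD rtrancl.rtrancl_into_rtrancl)
qed simp

lemma reach_dpath:
  assumes "(v,k) \<in> E\<^sup>*" "k \<in> V"
  shows "\<exists>l. is_directed_path V E l \<and> hd l = v \<and> last l = k"
  using assms(1)
proof (induction rule: converse_rtrancl_induct)
  case base
  then show ?case using assms(2) by (intro exI[of _ "[k]"]) (simp add: is_directed_path_def)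
next
  case (step v u)
  then obtain l where l: "is_directed_path V E l" "hd l = u" "last l = k" by blast
  have lne: "l \<noteq> []" using l by (simp add: is_directed_path_def)
  have "v \<notin> set l"
  proof
    assume "v \<in> set l"
    then obtain m where "m < length l" "l!m = v" by (auto simp: in_set_conv_nth)
    then have "(u, v) \<in> E\<^sup>*" using dpath_reach[OF l(1)] l(2) lne by (metis hd_conv_nth)
    with step(1) have "(v,v) \<in> E\<^sup>+" by (meson rtrancl_into_trancl2)
    with acyc show False by (simp add: acyclic_def)
  qed
  moreover have "v \<in> V" using step(1) EV by auto
  moreover have "\<forall>i. Suc i < length (v#l) \<longrightarrow> ((v#l)!i, (v#l)!Suc i) \<in> E"
  proof (intro allI impI)
    fix i assume i: "Suc i < length (v#l)"
    show "((v#l)!i, (v#l)!Suc i) \<in> E"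
    proof (cases i)
      case 0 then show ?thesis using step(1) l(2) lne by (simp add: hd_conv_nth)
    next
      case (Suc m) then show ?thesis using l(1) i by (simp add: is_directed_path_def)
    qed
  qed
  ultimately have "is_directed_path V E (v # l)"
    using l lne unfolding is_directed_path_def by auto
  then show ?case using l lne by (intro exI[of _ "v # l"]) simp
qed

lemma collider_rev:
  assumes k: "k < length p"
  shows "collider E (rev p) k \<longleftrightarrow> collider E p (length p - 1 - k)"
proof -
  let ?n = "length p"
  show ?thesis
  proof (cases "0 < k \<and> Suc k < ?n")
    case True
    have "rev p ! (k-1) = p!(?n-Suc(k-1))" using True by (subst rev_nth) auto
    also have "?n-Suc(k-1) = Suc (?n-1-k)" using True by (auto simp: Suc_diff_Suc)
    finally have "rev p ! (k-1) = p!Suc (?n-1-k)" .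
    moreover have "rev p ! k = p!(?n-1-k)" using k by (simp add: rev_nth)
    moreover have "rev p ! Suc k = p!(?n-1-k-1)" using True by (simp add: rev_nth)
    moreover have "0 < ?n-1-k" "Suc (?n-1-k) < ?n" using True by auto
    ultimately show ?thesis using True by (auto simp: collider_def)
  next
    case False
    then show ?thesis using k by (auto simp: collider_def)
  qed
qed

lemma CS_rev: "CS E (rev p) = CS E p"
proof -
  let ?n = "length p"
  show ?thesis
  proof
    show "CS E (rev p) \<subseteq> CS E p"
    proof
      fix v assume "v \<in> CS E (rev p)"
      then obtain k where c: "collider E (rev p) k" "v = rev p ! k" by (auto simp: CS_def)
      then have k: "k < ?n" using collider_len by fastforce
      then show "v \<in> CS E p" using c collider_rev[OF k] by (auto simp: CS_def rev_nth)
    qed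
  next
    show "CS E p \<subseteq> CS E (rev p)"
    proof
      fix v assume "v \<in> CS E p"
      then obtain k where c: "collider E p k" "v = p ! k" by (auto simp: CS_def)
      then have k: "k < ?n" using collider_len by fastforce
      then have k2: "?n - 1 - k < ?n" "?n - 1 - (?n - 1 - k) = k" by auto
      have "collider E (rev p) (?n - 1 - k)" using collider_rev[OF k2(1)] k2(2) c by simp
      moreover have "rev p ! (?n - 1 - k) = v" using c k by (simp add: rev_nth)
      ultimately show "v \<in> CS E (rev p)" unfolding CS_def by blast
    qed
  qed
qed

lemma mu_rev: "mu E (rev p) Q = mu E p Q"
  by (simp add: mu_def CS_rev)

lemma valid_rev:
  assumes "valid V E K x y p Q"
  shows "valid V E K y x (rev p) Q"
proof -
  let ?n = "length p"
  have pb: "path_between V E x y p" and vnc: "\<And>k. non_collider E p k \<Longrightarrow> p!k \<notin> K"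
    and vc: "\<And>k. collider E p k \<Longrightarrow> dp V E K (Q (p!k)) (p!k)"
    using assms by (auto simp: valid_def)
  have pne: "p \<noteq> []" and pd: "distinct p" and pV: "set p \<subseteq> V"
    and padj: "\<And>m. Suc m < ?n \<Longrightarrow> adjacent E (p!m) (p!Suc m)"
    and hx: "hd p = x" and ly: "last p = y"
    using pb by (auto simp: path_between_def is_path_def)
  have adj: "adjacent E (rev p ! m) (rev p ! Suc m)" if m: "Suc m < ?n" for m
  proof -
    have "rev p ! m = p ! Suc (?n - 2 - m)" "rev p ! Suc m = p ! (?n - 2 - m)" "Suc (?n - 2 - m) < ?n"
      using m by (auto simp: rev_nth Suc_diff_Suc)
    then show ?thesis using padj[of "?n - 2 - m"] by (auto simp: adjacent_def)
  qed
  have "path_between V E y x (rev p)"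
    using pne pd pV adj hx ly by (auto simp: path_between_def is_path_def hd_rev last_rev)
  moreover have "rev p ! k \<notin> K" if "non_collider E (rev p) k" for k
  proof -
    have k: "k < ?n" using that by (simp add: non_collider_def)
    then have "non_collider E p (?n - 1 - k)" using that collider_rev[OF k] by (simp add: non_collider_def)
    then show ?thesis using vnc k by (simp add: rev_nth)
  qed
  moreover have "dp V E K (Q (rev p ! k)) (rev p ! k)" if "collider E (rev p) k" for k
  proof -
    have k: "k < ?n" using collider_len[OF that] by simp
    then show ?thesis using vc that collider_rev[OF k] by (simp add: rev_nth)
  qed
  ultimately show ?thesis by (simp add: valid_def)
qed

definition minimal where
  "minimal x y p Q \<longleftrightarrow> valid V E K x y p Q \<and> (\<forall>r Q'. valid V E K x y r Q' \<longrightarrow> mu E p Q \<le> mu E r Q')"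

lemma minimal_rev: "minimal x y p Q \<Longrightarrow> minimal y x (rev p) Q"
  unfolding minimal_def using valid_rev mu_rev by (metis rev_rev_ident)

lemma minK:
  assumes m: "minimal x y p Q" and c: "collider E p i" and s: "Suc s < length (Q (p!i))"
  shows "Q (p!i) ! s \<notin> K"
proof
  assume sK: "Q (p!i) ! s \<in> K"
  let ?l = "Q (p!i)"
  define Q' where "Q' = Q(p!i := take (Suc s) ?l)"
  have v: "valid V E K x y p Q" using m by (simp add: minimal_def)
  have dpl: "dp V E K ?l (p!i)" using v c by (simp add: valid_def)
  have dpt: "dp V E K (take (Suc s) ?l) (p!i)"
    using dpl sK s unfolding dp_def is_directed_path_def
    by (auto simp: last_take_Suc dest: in_set_takeD)
  have "valid V E K x y p Q'"
    using v dpt unfolding valid_def Q'_def by auto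
  then have le: "mu E p Q \<le> mu E p Q'" using m by (simp add: minimal_def)
  have iC: "p!i \<in> CS E p" using c by (auto simp: CS_def)
  have e1: "(\<Sum>v\<in>CS E p. length (Q' v)) = length (Q' (p!i)) + (\<Sum>v\<in>CS E p - {p!i}. length (Q' v))"
    by (rule sum.remove[OF finite_CS iC])
  have e2: "(\<Sum>v\<in>CS E p. length (Q v)) = length (Q (p!i)) + (\<Sum>v\<in>CS E p - {p!i}. length (Q v))"
    by (rule sum.remove[OF finite_CS iC])
  have e3: "(\<Sum>v\<in>CS E p - {p!i}. length (Q' v)) = (\<Sum>v\<in>CS E p - {p!i}. length (Q v))"
    by (intro sum.cong) (auto simp: Q'_def)
  have e4: "length (Q' (p!i)) < length (Q (p!i))" using s by (simp add: Q'_def)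
  have "(\<Sum>v\<in>CS E p. length (Q' v)) < (\<Sum>v\<in>CS E p. length (Q v))"
    using e1 e2 e3 e4 by linarith
  then show False using le by (simp add: mu_def)
qed

end

context dagctx begin

lemma dp_basic:
  assumes "dp V E K l v"
  shows "l \<noteq> []" "l!0 = v" "distinct l" "set l \<subseteq> V" "last l \<in> K" "is_directed_path V E l"
  using assms by (auto simp: dp_def is_directed_path_def hd_conv_nth)

lemma M1f:
  assumes m: "minimal x y p Q" and c: "collider E p i" and q1: "q1 = Q (p!i)"
    and a: "1 \<le> a" "a < length q1" and nop: "\<forall>s. 1 \<le> s \<longrightarrow> s < a \<longrightarrow> q1!s \<notin> set p"
    and j: "q1!a = p!j" "j < length p" "i < j"
  shows False
proof -
  have v: "valid V E K x y p Q" using m by (simp add: minimal_def)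
  have dq: "dp V E K q1 (p!i)" using v c q1 by (simp add: valid_def)
  note dqb = dp_basic[OF dq]
  have pd: "distinct p" and pV: "set p \<subseteq> V" using v by (auto simp: valid_def path_between_def is_path_def)
  have pjV: "p!j \<in> V" using pV j by auto
  have "\<exists>r Q'. valid V E K x y r Q' \<and> mu E r Q' < mu E p Q"
  proof (rule splice[OF v refl j(3) j(2) dqb(6) dqb(2) a(1) a(2) dqb(5), of "[p!j]" 0])
    show "is_directed_path V E [p!j]" using pjV by (simp add: is_directed_path_def)
    show "[p!j]!0 = p!j" "0 < length [p!j]" "[p!j]!0 = q1!a" using j by auto
    show "\<forall>s m. 1 \<le> s \<longrightarrow> s \<le> a \<longrightarrow> m < length p \<longrightarrow> (m \<le> i \<or> j < m) \<longrightarrow> q1!s \<noteq> p!m"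
    proof (intro allI impI)
      fix s m assume h: "1 \<le> s" "s \<le> a" "m < length p" "m \<le> i \<or> j < m"
      show "q1!s \<noteq> p!m"
      proof (cases "s < a")
        case True then show ?thesis using nop h by auto
      next
        case False
        then have "s = a" using h by simp
        then show ?thesis using j h pd by (auto simp: nth_eq_iff_index_eq)
      qed
    qed
    show "\<forall>s<a. q1!s \<notin> K" using minK[OF m c] q1 a by auto
    show "collider E p i" "Q (p!i) = q1" using c q1 by auto
  qed auto
  then show False using m by (auto simp: minimal_def not_less[symmetric])
qed

lemma M1:
  assumes m: "minimal x y p Q" and c: "collider E p i"
  shows "set (Q (p!i)) \<inter> set p = {p!i}"
proof -
  define q1 where "q1 = Q (p!i)"
  have v: "valid V E K x y p Q" using m by (simp add: minimal_def)
  have dq: "dp V E K q1 (p!i)" using v c q1_def by (simp add: valid_def)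
  note dqb = dp_basic[OF dq]
  have pd: "distinct p" using v by (auto simp: valid_def path_between_def is_path_def)
  have ilt: "i < length p" using collider_len[OF c] by simp
  have "p!i \<in> set q1" using dqb by (metis nth_mem length_greater_0_conv)
  moreover have "p!i \<in> set p" using ilt by simp
  moreover have "z = p!i" if z: "z \<in> set q1" "z \<in> set p" for z
  proof (rule ccontr)
    assume zne: "z \<noteq> p!i"
    obtain s0 where s0: "s0 < length q1" "q1!s0 = z" using z by (auto simp: in_set_conv_nth)
    have "s0 \<noteq> 0"
    proof
      assume "s0 = 0"
      then have "q1!s0 = p!i" using dqb(2) by simp
      with s0 zne show False by simp
    qed
    define P where "P = (\<lambda>s. 1 \<le> s \<and> s < length q1 \<and> q1!s \<in> set p)"
    have Ps0: "P s0" using s0 z \<open>s0 \<noteq> 0\<close> by (simp add: P_def)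
    define a where "a = (LEAST s. P s)"
    have Pa: "P a" using LeastI[of P, OF Ps0] a_def by simp
    have a1: "1 \<le> a" and a2: "a < length q1" using Pa by (auto simp: P_def)
    have nop: "\<forall>s. 1 \<le> s \<longrightarrow> s < a \<longrightarrow> q1!s \<notin> set p"
    proof (intro allI impI notI)
      fix s assume h: "1 \<le> s" "s < a" "q1!s \<in> set p"
      then have "P s" using a2 by (simp add: P_def)
      then have "a \<le> s" unfolding a_def by (rule Least_le)
      with h(2) show False by simp
    qed
    obtain j where jl: "j < length p" and jq: "q1!a = p!j" using Pa by (auto simp: P_def in_set_conv_nth)
    have "q1!a \<noteq> q1!0" using a1 a2 dqb(1,3) nth_eq_iff_index_eq[of q1 a 0] by simp
    then have "j \<noteq> i" using jq dqb(2) by auto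
    then consider "i < j" | "j < i" by linarith
    then show False
    proof cases
      case 1
      show False by (rule M1f[OF m c q1_def a1 a2 nop jq jl 1])
    next
      case 2
      let ?n = "length p"
      have mr: "minimal y x (rev p) Q" using minimal_rev[OF m] .
      have i': "?n - 1 - i < ?n" "?n - 1 - (?n - 1 - i) = i" using ilt by auto
      have cr: "collider E (rev p) (?n - 1 - i)" using collider_rev[OF i'(1)] i'(2) c by simp
      have ri: "rev p ! (?n - 1 - i) = p!i" using ilt by (simp add: rev_nth)
      have rj: "q1!a = rev p ! (?n - 1 - j)" using jl jq by (simp add: rev_nth)
      have lt: "?n - 1 - i < ?n - 1 - j" using 2 ilt by simp
      have jl': "?n - 1 - j < length (rev p)" using jl by simp
      have q1': "q1 = Q (rev p ! (?n - 1 - i))" using ri q1_def by simp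
      have nop': "\<forall>s. 1 \<le> s \<longrightarrow> s < a \<longrightarrow> q1!s \<notin> set (rev p)" using nop by simp
      show False by (rule M1f[OF mr cr q1' a1 a2 nop' rj jl' lt])
    qed
  qed
  ultimately show ?thesis unfolding q1_def by blast
qed

end

context dagctx begin

lemma M2:
  assumes m: "minimal x y p Q" and ci: "collider E p i" and cj: "collider E p j" and ij: "i < j"
  shows "set (Q (p!i)) \<inter> set (Q (p!j)) = {}"
proof (rule ccontr)
  assume ne: "set (Q (p!i)) \<inter> set (Q (p!j)) \<noteq> {}"
  define q1 where "q1 = Q (p!i)"
  define q2 where "q2 = Q (p!j)"
  have v: "valid V E K x y p Q" using m by (simp add: minimal_def)
  have dq1: "dp V E K q1 (p!i)" using v ci q1_def by (simp add: valid_def)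
  have dq2: "dp V E K q2 (p!j)" using v cj q2_def by (simp add: valid_def)
  note b1 = dp_basic[OF dq1] and b2 = dp_basic[OF dq2]
  have s1: "set q1 \<inter> set p = {p!i}" using M1[OF m ci] q1_def by simp
  have s2: "set q2 \<inter> set p = {p!j}" using M1[OF m cj] q2_def by simp
  have pd: "distinct p" using v by (auto simp: valid_def path_between_def is_path_def)
  have jn: "j < length p" using collider_len[OF cj] by simp
  have pij: "p!i \<noteq> p!j" using pd ij jn nth_eq_iff_index_eq[of p i j] by simp
  obtain z where z: "z \<in> set q1" "z \<in> set q2" using ne q1_def q2_def by blast
  obtain s0 where s0: "s0 < length q1" "q1!s0 = z" using z by (auto simp: in_set_conv_nth)
  define P where "P = (\<lambda>s. s < length q1 \<and> q1!s \<in> set q2)"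
  have Ps0: "P s0" using s0 z by (simp add: P_def)
  define a where "a = (LEAST s. P s)"
  have Pa: "P a" using LeastI[of P, OF Ps0] a_def by simp
  have a2: "a < length q1" and aq: "q1!a \<in> set q2" using Pa by (auto simp: P_def)
  have mina: "q1!s \<notin> set q2" if "s < a" for s
  proof
    assume "q1!s \<in> set q2"
    then have "P s" using that a2 by (simp add: P_def)
    then have "a \<le> s" unfolding a_def by (rule Least_le)
    with that show False by simp
  qed
  obtain b where bl: "b < length q2" and bq: "q2!b = q1!a" using aq by (auto simp: in_set_conv_nth)
  have a1: "1 \<le> a"
  proof (rule ccontr)
    assume "\<not> 1 \<le> a"
    then have "a = 0" by simp
    then have "p!i \<in> set q2" using aq b1(2) by simp
    moreover have "p!i \<in> set p" using ci collider_len[OF ci] by simp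
    ultimately show False using s2 pij by blast
  qed
  have bpos: "0 < b"
  proof (rule ccontr)
    assume "\<not> 0 < b"
    then have "b = 0" by simp
    then have "p!j \<in> set q1" using bq b2(2) a2 by (metis nth_mem)
    moreover have "p!j \<in> set p" using jn by simp
    ultimately show False using s1 pij by (metis IntI singletonD)
  qed
  have "\<exists>r Q'. valid V E K x y r Q' \<and> mu E r Q' < mu E p Q"
  proof (rule splice[OF v refl ij jn b1(6) b1(2) a1 a2 b1(5) b2(6) b2(2) bl bq])
    show "\<forall>s m. 1 \<le> s \<longrightarrow> s \<le> a \<longrightarrow> m < length p \<longrightarrow> (m \<le> i \<or> j < m) \<longrightarrow> q1!s \<noteq> p!m"
    proof (intro allI impI notI)
      fix s m assume h: "1 \<le> s" "s \<le> a" "m < length p" "m \<le> i \<or> j < m" "q1!s = p!m"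
      have "s < length q1" using h a2 by simp
      then have "q1!s \<in> set q1" by (rule nth_mem)
      moreover have "q1!s \<in> set p" using h by simp
      ultimately have "q1!s \<in> set q1 \<inter> set p" by blast
      then have "q1!s = q1!0" using s1 b1(2) by simp
      then show False using h a2 b1(1,3) nth_eq_iff_index_eq[of q1 s 0] by simp
    qed
    show "\<forall>t m. t < b \<longrightarrow> m < length p \<longrightarrow> (m \<le> i \<or> j < m) \<longrightarrow> q2!t \<noteq> p!m"
    proof (intro allI impI notI)
      fix t m assume h: "t < b" "m < length p" "m \<le> i \<or> j < m" "q2!t = p!m"
      have "t < length q2" using h bl by simp
      then have "q2!t \<in> set q2" by (rule nth_mem)
      moreover have "q2!t \<in> set p" using h by simp
      ultimately have "q2!t \<in> set q2 \<inter> set p" by blast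
      then have "p!m = p!j" using s2 h by simp
      then show False using h jn ij pd nth_eq_iff_index_eq[of p m j] by auto
    qed
    show "\<forall>s t. 1 \<le> s \<longrightarrow> s \<le> a \<longrightarrow> t < b \<longrightarrow> q1!s \<noteq> q2!t"
    proof (intro allI impI notI)
      fix s t assume h: "1 \<le> s" "s \<le> a" "t < b" "q1!s = q2!t"
      show False
      proof (cases "s < a")
        case True
        then show False using mina[OF True] h bl by (metis less_trans nth_mem)
      next
        case False
        then have "q2!b = q2!t" using h bq by simp
        then show False using h bl b2(3) nth_eq_iff_index_eq[of q2 b t] by simp
      qed
    qed
    show "\<forall>s<a. q1!s \<notin> K" using minK[OF m ci] q1_def a2 by auto
    show "\<forall>t<b. q2!t \<notin> K" using minK[OF m cj] q2_def bl by auto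
    show "collider E p i" "Q (p!i) = q1" "0 < b \<longrightarrow> collider E p j \<and> Q (p!j) = q2"
      using ci cj q1_def q2_def by auto
  qed
  then show False using m by (auto simp: minimal_def not_less[symmetric])
qed

end

theorem lemma6p2:
  fixes V :: "'a set" and E :: "('a \<times> 'a) set" and K :: "'a set" and x y :: 'a
  assumes "is_dag V E" and "x \<in> V" and "y \<in> V" and "K \<subseteq> V"
    and "\<not> d_separates V E K x y"
  shows "\<exists>p. path_between V E x y p
    \<and> (\<forall>i. non_collider E p i \<longrightarrow> p ! i \<notin> K)
    \<and> (\<exists>q :: nat \<Rightarrow> 'a list.
         (\<forall>i. collider E p i \<longrightarrow>
             is_directed_path V E (q i) \<and> hd (q i) = p ! i \<and> last (q i) \<in> K
             \<and> set (q i) \<inter> set p = {p ! i})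
       \<and> (\<forall>i j. collider E p i \<and> collider E p j \<and> i \<noteq> j \<longrightarrow>
             set (q i) \<inter> set (q j) = {}))"
proof -
  interpret dagctx V E K using assms(1,4) by unfold_locales
  obtain p where pb: "path_between V E x y p"
    and nc: "\<And>i. non_collider E p i \<Longrightarrow> p!i \<notin> K"
    and col: "\<And>i. collider E p i \<Longrightarrow> \<not> (p!i \<notin> K \<and> descendants E (p!i) \<inter> K = {})"
    using assms(5) unfolding d_separates_def by blast
  define Q0 where "Q0 = (\<lambda>v. SOME l. dp V E K l v)"
  have "dp V E K (Q0 (p!i)) (p!i)" if c: "collider E p i" for i
  proof -
    obtain k where k: "k \<in> K" "(p!i, k) \<in> E\<^sup>*"
      using col[OF c] by (auto simp: descendants_def)
    then obtain l where "is_directed_path V E l" "hd l = p!i" "last l = k"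
      using reach_dpath KV by blast
    then have "\<exists>l. dp V E K l (p!i)" using k by (auto simp: dp_def)
    then show ?thesis unfolding Q0_def by (rule someI_ex)
  qed
  then have v0: "valid V E K x y p Q0" using pb nc by (simp add: valid_def)
  obtain pQ where pQ: "(\<lambda>(r,Q). valid V E K x y r Q) pQ"
    "\<forall>z. (\<lambda>(r,Q). valid V E K x y r Q) z \<longrightarrow> (\<lambda>(r,Q). mu E r Q) pQ \<le> (\<lambda>(r,Q). mu E r Q) z"
    using ex_has_least_nat[of "\<lambda>(r,Q). valid V E K x y r Q" "(p, Q0)" "\<lambda>(r,Q). mu E r Q"] v0 by auto
  obtain p' Q' where pQe: "pQ = (p', Q')" by (cases pQ)
  have m: "minimal x y p' Q'" using pQ pQe unfolding minimal_def by auto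
  have v: "valid V E K x y p' Q'" using m by (simp add: minimal_def)
  show ?thesis
  proof (intro exI conjI)
    show "path_between V E x y p'" using v by (simp add: valid_def)
    show "\<forall>i. non_collider E p' i \<longrightarrow> p' ! i \<notin> K" using v by (simp add: valid_def)
    show "\<forall>i. collider E p' i \<longrightarrow>
             is_directed_path V E (Q' (p'!i)) \<and> hd (Q' (p'!i)) = p' ! i \<and> last (Q' (p'!i)) \<in> K
             \<and> set (Q' (p'!i)) \<inter> set p' = {p' ! i}"
      using v M1[OF m] by (auto simp: valid_def dp_def)
    show "\<forall>i j. collider E p' i \<and> collider E p' j \<and> i \<noteq> j \<longrightarrow>
             set (Q' (p'!i)) \<inter> set (Q' (p'!j)) = {}"
    proof (intro allI impI)
      fix i j assume h: "collider E p' i \<and> collider E p' j \<and> i \<noteq> j"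
      then consider "i < j" | "j < i" by linarith
      then show "set (Q' (p'!i)) \<inter> set (Q' (p'!j)) = {}"
      proof cases
        case 1 then show ?thesis using M2[OF m] h by blast
      next
        case 2 then show ?thesis using M2[OF m] h by blast
      qed
    qed
  qed
qed


end
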